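(* A cubical iterated graph system is of bounded geometry.
   Context: Graphs: $(V,E)$, $V$ finite non-empty, $E\subseteq V\times V$, $(x,y)\in E\Rightarrow(y,x)\notin E$; $\{x,y\}\in E$ means either orientation; a path is a sequence $[x_1,\dots,x_k]$ ($k\ge1$) with $\{x_i,x_{i+1}\}\in E$, of length $k-1$; $d_G$ is the path metric. An iterated graph system (IGS) $\mathfrak R$ consists of a connected graph $G_1=(S,E)$, a finite set $\mathcal T$ of types, a surjective typing $\mathfrak t:E\to\mathcal T$ and non-empty gluing rules $I_t\subseteq S\times S$. With $W_m=S^m$, $W_\#=\bigcup_{m\ge1}W_m$, $[w]_k=w_1\cdots w_k$, the replacement graphs $G_m=(W_m,E_m)$ are defined recursively: $(w,v)\in E_{m+1}$ iff either (1) $[w]_m=[v]_m$ and $(w_{m+1},v_{m+1})\in E$ (type $\mathfrak t(w_{m+1},v_{m+1})$), or (2) $([w]_m,[v]_m)\in E_m$ and $(w_{m+1},v_{m+1})\in I_{\mathfrak t([w]_m,[v]_m)}$ (type $\mathfrak t([w]_m,[v]_m)$). For $n\ge k$, $\pi_{n,k}$ maps a path of $G_n$ to the path of $G_k$ obtained by replacing each vertex $w$ by $[w]_k$ and deleting consecutive repetitions. A path $\theta$ in $G_m$ is an intersection path if there are paths $\theta_n$ in $G_n$ ($n\in\mathbb N$) with $\theta_m=\theta$, $\pi_{n,k}(\theta_n)=\theta_k$ for $n>k$, and $\lim_n\operatorname{len}(\theta_n)<\infty$. $\mathcal N(w)=\{v\in W_{|w|}:$ there is an intersection path from $w$ to $v\}$;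 $\mathfrak R$ is of bounded geometry if $\sup_{w\in W_\#}\operatorname{diam}_{d_{G_{|w|}}}(\mathcal N(w))<\infty$. Mapping of IGS $\varphi:\mathfrak R\to\mathfrak R'$: a graph mapping $G_1\to G_1'$ (edges go to edges or are collapsed) such that (i) if $\varphi(w_1)=\varphi(v_1)$ for an edge $\{w_1,v_1\}$ of type $t$ then $\varphi(w_2)=\varphi(v_2)$ for all $(w_2,v_2)\in I_t$; (ii) if $(w_1,v_1)\in E$ has type $t$ and $(\varphi(w_1),\varphi(v_1))\in E'$ has type $t'$ then $(\varphi(w_2),\varphi(v_2))\in I'_{t'}$ for all $(w_2,v_2)\in I_t$; (iii) if $(w_1,v_1)\in E$ has type $t$ and $(\varphi(v_1),\varphi(w_1))\in E'$ has type $t'$ then $(\varphi(v_2),\varphi(w_2))\in I'_{t'}$ for all $(w_2,v_2)\in I_t$. An isomorphism of IGS is a graph isomorphism such that it and its inverse are mappings of IGS; $\mathfrak R\subseteq\mathfrak R'$ (sub-system) means $S\subseteq S'$, same types, inclusion is a mapping of IGS. Cubical IGS: for integers $d_*\ge1,s_*\ge1,L_*\ge3$, $\mathfrak R(d_*,L_*,s_* )$ has symbols $\{1,\dots,L_*\}^{d_*}\times\{\underline1,\dots,\underline{s_*}\}$ with coordinates $c_i$ and sheet $s$; types $t_1,\dots,t_{d_*}$; $(w,v)$ is an edge of type $t_j$ iff $c_i(v)=c_i(w)$ ($i\ne j$), $c_j(v)=c_j(w)+1$; $(w,v)\in I_{t_j}$ iff $c_i(w)=c_i(v)$ ($i\ne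 j$), $(c_j(w),c_j(v))=(L_*,1)$, $s(w)=s(v)$. Sheet- and other-coordinate-preserving maps: $\eta_j:c_j\mapsto L_*+1-c_j$; $\alpha^+_{j,k}$ ($j\ne k$) swaps $c_j,c_k$; $\alpha^-_{j,k}$: $c_k\mapsto L_*+1-c_j$, $c_j\mapsto L_*+1-c_k$; $\mathcal G$ is the set of these. A cubical IGS is a sub-system $\mathfrak R\subseteq\mathfrak R(d_*,L_*,s_* )$ with: (C1) for each $j$, every symbol with $c_i\in\{1,L_*\}$ for all $i\ne j$ and sheet $\underline1$ (condition $(\ast_j)$) is in $S(\mathfrak R)$; (C2) if $w,v$ satisfy $(\ast_j)$, agree in coordinates $i\ne j$, and $c_j(v)=c_j(w)+1$, then $(w,v)\in E(\mathfrak R)$; (C3) if $w,v$ satisfy $(\ast_j)$, agree in coordinates $i\ne j$, and $(c_j(w),c_j(v))=(L_*,1)$, then $(w,v)\in I_{t_j}(\mathfrak R)$; (C4) each $\alpha\in\mathcal G$ restricts to an isomorphism of IGS $\mathfrak R\to\mathfrak R$. *)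

theory Defs
  imports Main "HOL-Library.Extended_Nat"
begin

definition is_path :: "'v set \<Rightarrow> ('v \<times> 'v) set \<Rightarrow> 'v list \<Rightarrow> bool" where
  "is_path V E p \<longleftrightarrow> p \<noteq> [] \<and> set p \<subseteq> V \<and>
     (\<forall>i. Suc i < length p \<longrightarrow> (p ! i, p ! Suc i) \<in> E \<or> (p ! Suc i, p ! i) \<in> E)"

definition plen :: "'v list \<Rightarrow> nat" where
  "plen p = length p - 1"

text \<open>Path metric (with value \<infinity> if no path exists).\<close>
definition gdist :: "'v set \<Rightarrow> ('v \<times> 'v) set \<Rightarrow> 'v \<Rightarrow> 'v \<Rightarrow> enat" where
  "gdist V E x y = (INF p \<in> {p. is_path V E p \<and> hd p = x \<and> last p = y}. enat (plen p))"

definition gdiam :: "'v set \<Rightarrow> ('v \<times> 'v) set \<Rightarrow> 'v set \<Rightarrow> enat" where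
  "gdiam V E A = (SUP xy \<in> A \<times> A. gdist V E (fst xy) (snd xy))"

definition is_graph :: "'v set \<Rightarrow> ('v \<times> 'v) set \<Rightarrow> bool" where
  "is_graph V E \<longleftrightarrow> finite V \<and> V \<noteq> {} \<and> E \<subseteq> V \<times> V \<and>
     (\<forall>x y. (x, y) \<in> E \<longrightarrow> (y, x) \<notin> E)"

definition connected_graph :: "'v set \<Rightarrow> ('v \<times> 'v) set \<Rightarrow> bool" where
  "connected_graph V E \<longleftrightarrow> (\<forall>x\<in>V. \<forall>y\<in>V. \<exists>p. is_path V E p \<and> hd p = x \<and> last p = y)"

record ('a, 't) igs =
  syms :: "'a set"
  edg  :: "('a \<times> 'a) set"
  tys  :: "'t set"
  ityp :: "'a \<times> 'a \<Rightarrow> 't"          \<comment> \<open>typing (relevant on E only)\<close>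
  glue :: "'t \<Rightarrow> ('a \<times> 'a) set"

definition is_igs :: "('a, 't) igs \<Rightarrow> bool" where
  "is_igs R \<longleftrightarrow> is_graph (syms R) (edg R) \<and> connected_graph (syms R) (edg R) \<and>
     finite (tys R) \<and> ityp R ` edg R = tys R \<and>
     (\<forall>t\<in>tys R. glue R t \<noteq> {} \<and> glue R t \<subseteq> syms R \<times> syms R)"

text \<open>Words: w = w_1 ... w_m is the list [w_1,...,w_m]; the prefix [w]_k is take k w.\<close>
definition words :: "('a, 't) igs \<Rightarrow> nat \<Rightarrow> 'a list set" where
  "words R m = {w. length w = m \<and> set w \<subseteq> syms R}"

definition all_words :: "('a, 't) igs \<Rightarrow> 'a list set" where
  "all_words R = (\<Union>m\<in>{1..}. words R m)"

text \<open>Typed edges of the replacement graph G_m: triples (w, v, type).\<close>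
fun tedges :: "('a, 't) igs \<Rightarrow> nat \<Rightarrow> ('a list \<times> 'a list \<times> 't) set" where
  "tedges R 0 = {}"
| "tedges R (Suc m) =
     {(w @ [a], w @ [b], ityp R (a, b)) | w a b. w \<in> words R m \<and> (a, b) \<in> edg R}
   \<union> {(w @ [a], v @ [b], \<tau>) | w v \<tau> a b. (w, v, \<tau>) \<in> tedges R m \<and> (a, b) \<in> glue R \<tau>}"

definition redges :: "('a, 't) igs \<Rightarrow> nat \<Rightarrow> ('a list \<times> 'a list) set" where
  "redges R m = {(w, v). \<exists>\<tau>. (w, v, \<tau>) \<in> tedges R m}"

definition proj :: "nat \<Rightarrow> 'a list list \<Rightarrow> 'a list list" where
  "proj k p = remdups_adj (map (take k) p)"

definition intersection_path :: "('a, 't) igs \<Rightarrow> nat \<Rightarrow> 'a list list \<Rightarrow> bool" where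
  "intersection_path R m \<theta> \<longleftrightarrow> 1 \<le> m \<and>
     (\<exists>\<Theta> :: nat \<Rightarrow> 'a list list.
        \<Theta> m = \<theta> \<and>
        (\<forall>n\<ge>1. is_path (words R n) (redges R n) (\<Theta> n)) \<and>
        (\<forall>n k. 1 \<le> k \<and> k < n \<longrightarrow> proj k (\<Theta> n) = \<Theta> k) \<and>
        convergent (\<lambda>n. real (plen (\<Theta> n))))"

definition nbhd :: "('a, 't) igs \<Rightarrow> 'a list \<Rightarrow> 'a list set" where
  "nbhd R w = {v \<in> words R (length w).
      \<exists>\<theta>. intersection_path R (length w) \<theta> \<and> hd \<theta> = w \<and> last \<theta> = v}"

definition bounded_geometry :: "('a, 't) igs \<Rightarrow> bool" where
  "bounded_geometry R \<longleftrightarrow>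
     (SUP w \<in> all_words R. gdiam (words R (length w)) (redges R (length w)) (nbhd R w)) < \<infinity>"

definition igs_mapping :: "('a \<Rightarrow> 'b) \<Rightarrow> ('a, 's) igs \<Rightarrow> ('b, 't) igs \<Rightarrow> bool" where
  "igs_mapping \<phi> R R' \<longleftrightarrow>
     \<phi> ` syms R \<subseteq> syms R' \<and>
     (\<forall>(w, v) \<in> edg R. \<phi> w = \<phi> v \<or> (\<phi> w, \<phi> v) \<in> edg R' \<or> (\<phi> v, \<phi> w) \<in> edg R') \<and>
     (\<forall>(w1, v1) \<in> edg R.
        (\<phi> w1 = \<phi> v1 \<longrightarrow>
           (\<forall>(w2, v2) \<in> glue R (ityp R (w1, v1)). \<phi> w2 = \<phi> v2)) \<and>
        ((\<phi> w1, \<phi> v1) \<in> edg R' \<longrightarrow>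
           (\<forall>(w2, v2) \<in> glue R (ityp R (w1, v1)).
               (\<phi> w2, \<phi> v2) \<in> glue R' (ityp R' (\<phi> w1, \<phi> v1)))) \<and>
        ((\<phi> v1, \<phi> w1) \<in> edg R' \<longrightarrow>
           (\<forall>(w2, v2) \<in> glue R (ityp R (w1, v1)).
               (\<phi> v2, \<phi> w2) \<in> glue R' (ityp R' (\<phi> v1, \<phi> w1)))))"

definition igs_iso :: "('a \<Rightarrow> 'b) \<Rightarrow> ('a, 's) igs \<Rightarrow> ('b, 't) igs \<Rightarrow> bool" where
  "igs_iso \<phi> R R' \<longleftrightarrow>
     bij_betw \<phi> (syms R) (syms R') \<and>
     (\<forall>a\<in>syms R. \<forall>b\<in>syms R.
        ((a, b) \<in> edg R \<or> (b, a) \<in> edg R) \<longleftrightarrow>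
        ((\<phi> a, \<phi> b) \<in> edg R' \<or> (\<phi> b, \<phi> a) \<in> edg R')) \<and>
     igs_mapping \<phi> R R' \<and> igs_mapping (inv_into (syms R) \<phi>) R' R"

definition sub_igs :: "('a, 't) igs \<Rightarrow> ('a, 't) igs \<Rightarrow> bool" where
  "sub_igs R R' \<longleftrightarrow> is_igs R \<and> is_igs R' \<and> syms R \<subseteq> syms R' \<and> tys R = tys R' \<and>
     igs_mapping id R R'"

text \<open>Symbols of R(d,L,s): pairs (c, sigma) with c a coordinate list of length d
  (coordinates indexed 0..d-1) with entries in {1..L}, and a sheet sigma in {1..s}.
  The types t_1..t_d are represented by the indices 0..d-1.\<close>

type_synonym csym = "nat list \<times> nat"

definition cube_syms :: "nat \<Rightarrow> nat \<Rightarrow> nat \<Rightarrow> csym set" where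
  "cube_syms d L s = {(c, \<sigma>). length c = d \<and> (\<forall>i<d. 1 \<le> c ! i \<and> c ! i \<le> L) \<and> 1 \<le> \<sigma> \<and> \<sigma> \<le> s}"

definition cube_edge_j :: "nat \<Rightarrow> nat \<Rightarrow> csym \<Rightarrow> csym \<Rightarrow> bool" where
  "cube_edge_j d j w v \<longleftrightarrow> j < d \<and> (\<forall>i<d. i \<noteq> j \<longrightarrow> fst v ! i = fst w ! i) \<and>
     fst v ! j = fst w ! j + 1"

definition cube_glue_j :: "nat \<Rightarrow> nat \<Rightarrow> nat \<Rightarrow> csym \<Rightarrow> csym \<Rightarrow> bool" where
  "cube_glue_j d L j w v \<longleftrightarrow> j < d \<and> (\<forall>i<d. i \<noteq> j \<longrightarrow> fst w ! i = fst v ! i) \<and>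
     fst w ! j = L \<and> fst v ! j = 1 \<and> snd w = snd v"

definition full_cube :: "nat \<Rightarrow> nat \<Rightarrow> nat \<Rightarrow> (csym, nat) igs" where
  "full_cube d L s =
     \<lparr> syms = cube_syms d L s,
       edg = {(w, v). w \<in> cube_syms d L s \<and> v \<in> cube_syms d L s \<and> (\<exists>j. cube_edge_j d j w v)},
       tys = {..<d},
       ityp = (\<lambda>(w, v). LEAST j. j < d \<and> fst w ! j \<noteq> fst v ! j),
       glue = (\<lambda>j. {(w, v). w \<in> cube_syms d L s \<and> v \<in> cube_syms d L s \<and> cube_glue_j d L j w v}) \<rparr>"

definition eta :: "nat \<Rightarrow> nat \<Rightarrow> csym \<Rightarrow> csym" where
  "eta L j = (\<lambda>(c, \<sigma>). (c[j := L + 1 - c ! j], \<sigma>))"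

definition alpha_plus :: "nat \<Rightarrow> nat \<Rightarrow> csym \<Rightarrow> csym" where
  "alpha_plus j k = (\<lambda>(c, \<sigma>). (c[j := c ! k, k := c ! j], \<sigma>))"

definition alpha_minus :: "nat \<Rightarrow> nat \<Rightarrow> nat \<Rightarrow> csym \<Rightarrow> csym" where
  "alpha_minus L j k = (\<lambda>(c, \<sigma>). (c[k := L + 1 - c ! j, j := L + 1 - c ! k], \<sigma>))"

definition cube_group :: "nat \<Rightarrow> nat \<Rightarrow> (csym \<Rightarrow> csym) set" where
  "cube_group d L = {eta L j | j. j < d}
     \<union> {alpha_plus j k | j k. j < d \<and> k < d \<and> j \<noteq> k}
     \<union> {alpha_minus L j k | j k. j < d \<and> k < d \<and> j \<noteq> k}"

definition star_cond :: "nat \<Rightarrow> nat \<Rightarrow> nat \<Rightarrow> nat \<Rightarrow> csym \<Rightarrow> bool" where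
  "star_cond d L s j w \<longleftrightarrow> w \<in> cube_syms d L s \<and>
     (\<forall>i<d. i \<noteq> j \<longrightarrow> fst w ! i = 1 \<or> fst w ! i = L) \<and> snd w = 1"

definition cubical_igs :: "nat \<Rightarrow> nat \<Rightarrow> nat \<Rightarrow> (csym, nat) igs \<Rightarrow> bool" where
  "cubical_igs d L s R \<longleftrightarrow> 1 \<le> d \<and> 1 \<le> s \<and> 3 \<le> L \<and>
     sub_igs R (full_cube d L s) \<and>
     (\<forall>j<d. \<forall>w. star_cond d L s j w \<longrightarrow> w \<in> syms R) \<and>
     (\<forall>j<d. \<forall>w v. star_cond d L s j w \<and> star_cond d L s j v \<and>
        (\<forall>i<d. i \<noteq> j \<longrightarrow> fst w ! i = fst v ! i) \<and> fst v ! j = fst w ! j + 1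
        \<longrightarrow> (w, v) \<in> edg R) \<and>
     (\<forall>j<d. \<forall>w v. star_cond d L s j w \<and> star_cond d L s j v \<and>
        (\<forall>i<d. i \<noteq> j \<longrightarrow> fst w ! i = fst v ! i) \<and> fst w ! j = L \<and> fst v ! j = 1
        \<longrightarrow> (w, v) \<in> glue R j) \<and>
     (\<forall>\<alpha>\<in>cube_group d L. igs_iso \<alpha> R R)"

end

theory Submission imports Defs Complex_Main begin

fun posr :: "nat \<Rightarrow> nat \<Rightarrow> csym list \<Rightarrow> nat" where
  "posr L j [] = 0"
| "posr L j (a # xs) = posr L j xs * L + (fst a ! j - 1)"

definition pos :: "nat \<Rightarrow> nat \<Rightarrow> csym list \<Rightarrow> nat" where
  "pos L j xs = posr L j (rev xs)"

lemma pos_snoc[simp]: "pos L j (xs @ [a]) = pos L j xs * L + (fst a ! j - 1)"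
  by (simp add: pos_def)

definition digok :: "nat \<Rightarrow> nat \<Rightarrow> csym list \<Rightarrow> bool" where
  "digok L j xs \<longleftrightarrow> (\<forall>a\<in>set xs. 1 \<le> fst a ! j \<and> fst a ! j \<le> L)"

lemma posr_bound: "digok L j xs \<Longrightarrow> posr L j xs < L ^ length xs"
proof (induction xs)
  case Nil then show ?case by simp
next
  case (Cons a xs)
  have ih: "posr L j xs + 1 \<le> L ^ length xs" using Cons by (simp add: digok_def)
  have e: "fst a ! j - 1 < L" using Cons.prems by (auto simp: digok_def)
  have "posr L j (a # xs) < posr L j xs * L + L" using e by simp
  also have "\<dots> = (posr L j xs + 1) * L" by (simp add: algebra_simps)
  also have "\<dots> \<le> L ^ length xs * L" using ih by (rule mult_right_mono) simp
  finally show ?case by (simp add: algebra_simps)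
qed

lemma posr_append: "posr L j (xs @ ys) = posr L j ys * L ^ length xs + posr L j xs"
  by (induction xs) (auto simp: algebra_simps)

lemma dm: "e < (L::nat) \<Longrightarrow> (P*L + e) mod L = e \<and> (P*L + e) div L = P"
  by simp

lemma posr_inj: "length xs = length ys \<Longrightarrow> digok L j xs \<Longrightarrow> digok L j ys \<Longrightarrow> posr L j xs = posr L j ys
  \<Longrightarrow> map (\<lambda>a. fst a ! j) xs = map (\<lambda>a. fst a ! j) ys"
proof (induction xs arbitrary: ys)
  case Nil then show ?case by simp
next
  case (Cons a xs)
  then obtain b ys' where ys: "ys = b # ys'" by (cases ys) auto
  have da: "fst a ! j - 1 < L" "1 \<le> fst a ! j" using Cons.prems by (auto simp: digok_def)
  have db: "fst b ! j - 1 < L" "1 \<le> fst b ! j" using Cons.prems ys by (auto simp: digok_def)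
  have eq: "posr L j xs * L + (fst a ! j - 1) = posr L j ys' * L + (fst b ! j - 1)" using Cons.prems ys by simp
  have A: "(posr L j xs * L + (fst a ! j - 1)) mod L = fst a ! j - 1 \<and> (posr L j xs * L + (fst a ! j - 1)) div L = posr L j xs"
    using dm[OF da(1)] .
  have B: "(posr L j ys' * L + (fst b ! j - 1)) mod L = fst b ! j - 1 \<and> (posr L j ys' * L + (fst b ! j - 1)) div L = posr L j ys'"
    using dm[OF db(1)] .
  have e1: "fst a ! j - 1 = fst b ! j - 1" using A B eq by metis
  have e2: "posr L j xs = posr L j ys'" using A B eq by metis
  have "map (\<lambda>a. fst a ! j) xs = map (\<lambda>a. fst a ! j) ys'"
    using Cons.IH[of ys'] Cons.prems ys e2 by (auto simp: digok_def)
  then show ?case using ys e1 da db by simp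
qed

lemma pos_take: assumes "digok L j x" "m \<le> length x"
  shows "\<exists>r. pos L j x = pos L j (take m x) * L ^ (length x - m) + r \<and> r < L ^ (length x - m)"
proof -
  have "rev x = rev (drop m x) @ rev (take m x)" by (metis append_take_drop_id rev_append)
  then have "pos L j x = pos L j (take m x) * L ^ (length x - m) + posr L j (rev (drop m x))"
    by (simp add: pos_def posr_append)
  moreover have "posr L j (rev (drop m x)) < L ^ (length x - m)"
    using posr_bound[of L j "rev (drop m x)"] assms(1) by (auto simp: digok_def dest: in_set_dropD)
  ultimately show ?thesis by blast
qed

lemma win_div: fixes A B M r r' :: nat
  assumes "r < M" "r' < M" "\<bar>int (A*M+r) - int (B*M+r')\<bar> \<le> 1"
  shows "\<bar>int A - int B\<bar> \<le> 1"
proof (rule ccontr)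
  assume "\<not> ?thesis"
  then have "A \<ge> B + 2 \<or> B \<ge> A + 2" by linarith
  then show False
  proof
    assume "A \<ge> B + 2"
    then have "A * M \<ge> (B + 2) * M" by (rule mult_right_mono) simp
    then have "int A * int M \<ge> (int B + 2) * int M" by (metis of_nat_add of_nat_le_iff of_nat_mult of_nat_numeral)
    then have "int A * int M \<ge> int B * int M + 2 * int M" by (simp add: algebra_simps)
    then show False using assms by simp
  next
    assume "B \<ge> A + 2"
    then have "B * M \<ge> (A + 2) * M" by (rule mult_right_mono) simp
    then have "int B * int M \<ge> (int A + 2) * int M" by (metis of_nat_add of_nat_le_iff of_nat_mult of_nat_numeral)
    then have "int B * int M \<ge> int A * int M + 2 * int M" by (simp add: algebra_simps)
    then show False using assms by simp
  qed
qed

lemma int3: "\<bar>x::int\<bar> \<le> 1 \<Longrightarrow> x \<in> {-1, 0, 1}" by auto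

lemma split_uniq: "xs1 @ c1 # r1 = xs2 @ c2 # r2 \<Longrightarrow> c1 \<noteq> X \<Longrightarrow> c2 \<noteq> X \<Longrightarrow> set r1 \<subseteq> {X} \<Longrightarrow> set r2 \<subseteq> {X}
  \<Longrightarrow> length xs1 = length xs2"
proof (induction xs1 arbitrary: xs2)
  case Nil
  show ?case
  proof (cases xs2)
    case (Cons x xs2')
    then have "r1 = xs2' @ c2 # r2" using Nil.prems(1) by simp
    then have "c2 \<in> set r1" by simp
    then show ?thesis using Nil.prems by blast
  qed simp
next
  case (Cons x xs1)
  show ?case
  proof (cases xs2)
    case Nil
    then have "r2 = xs1 @ c1 # r1" using Cons.prems(1) by simp
    then have "c1 \<in> set r2" by simp
    then show ?thesis using Cons.prems by blast
  next
    case (Cons x' xs2')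
    then have "xs1 @ c1 # r1 = xs2' @ c2 # r2" using Cons.prems(1) by simp
    then have "length xs1 = length xs2'" using Cons.IH Cons.prems by blast
    then show ?thesis using Cons by simp
  qed
qed

lemma distinct_sub: "successively (\<lambda>x y. Q x y \<or> x = y) p \<Longrightarrow> p \<noteq> [] \<Longrightarrow>
  \<exists>q. q \<noteq> [] \<and> distinct q \<and> successively Q q \<and> set q \<subseteq> set p \<and> hd q = hd p \<and> last q = last p"
proof (induction p)
  case Nil then show ?case by simp
next
  case (Cons x p')
  show ?case
  proof (cases "p' = []")
    case True then show ?thesis by (intro exI[of _ "[x]"]) simp
  next
    case False
    have sp: "successively (\<lambda>x y. Q x y \<or> x = y) p'" using Cons.prems(1) by (cases p') auto
    have hx: "Q x (hd p') \<or> x = hd p'" using Cons.prems(1) False by (cases p') auto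
    obtain q' where q': "q' \<noteq> []" "distinct q'" "successively Q q'" "set q' \<subseteq> set p'" "hd q' = hd p'" "last q' = last p'"
      using Cons.IH[OF sp False] by blast
    show ?thesis
    proof (cases "x \<in> set q'")
      case True
      then obtain q1 q2 where sq: "q' = q1 @ x # q2" by (meson split_list)
      have "successively Q (x # q2)" using q'(3) sq by (simp add: successively_append_iff)
      moreover have "distinct (x # q2)" using q'(2) sq by simp
      moreover have "last (x # q2) = last (x # p')" using q'(6) sq False by (cases q2) auto
      ultimately show ?thesis using q'(4) sq by (intro exI[of _ "x # q2"]) auto
    next
      case False
      then have "x \<noteq> hd q'" using q'(1) by (metis list.set_sel(1))
      then have "Q x (hd q')" using hx q'(5) by simp
      then have "successively Q (x # q')" using q'(1,3) by (cases q') auto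
      then show ?thesis using q' False \<open>p' \<noteq> []\<close> by (intro exI[of _ "x # q'"]) auto
    qed
  qed
qed

lemma path_succ: "is_path V E p \<longleftrightarrow> p \<noteq> [] \<and> set p \<subseteq> V \<and> successively (\<lambda>x y. (x,y) \<in> E \<or> (y,x) \<in> E) p"
  unfolding is_path_def successively_conv_nth by blast

lemma gdist_card:
  assumes "p \<noteq> []" "set p \<subseteq> V" "successively (\<lambda>x y. ((x,y) \<in> E \<or> (y,x) \<in> E) \<or> x = y) p"
  shows "gdist V E (hd p) (last p) \<le> enat (card (set p) - 1)"
proof -
  obtain q where q: "q \<noteq> []" "distinct q" "successively (\<lambda>x y. (x,y) \<in> E \<or> (y,x) \<in> E) q" "set q \<subseteq> set p"
    "hd q = hd p" "last q = last p"
    using distinct_sub[OF assms(3,1)] by blast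
  have ip: "is_path V E q" using q assms(2) by (auto simp: path_succ)
  have "plen q = card (set q) - 1" using q(2) by (simp add: plen_def distinct_card)
  also have "\<dots> \<le> card (set p) - 1" using card_mono[OF _ q(4)] by simp
  finally have le: "plen q \<le> card (set p) - 1" .
  have "gdist V E (hd p) (last p) \<le> enat (plen q)"
    unfolding gdist_def by (rule INF_lower) (use ip q in auto)
  also have "\<dots> \<le> enat (card (set p) - 1)" using le by simp
  finally show ?thesis .
qed

locale cub =
  fixes d L s :: nat and R :: "(csym, nat) igs"
  assumes cub: "cubical_igs d L s R"
begin

lemma dL: "1 \<le> d" "1 \<le> s" "3 \<le> L" using cub by (auto simp: cubical_igs_def)
lemma sub: "sub_igs R (full_cube d L s)" using cub by (auto simp: cubical_igs_def)
lemma isR: "is_igs R" using sub by (simp add: sub_igs_def)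
lemma tysR: "tys R = {..<d}" using sub by (simp add: sub_igs_def full_cube_def)
lemma mapR: "igs_mapping id R (full_cube d L s)" using sub by (simp add: sub_igs_def)
lemma symsR: "syms R \<subseteq> cube_syms d L s" using mapR by (simp add: igs_mapping_def full_cube_def)
lemma finR: "finite (syms R)" using isR by (simp add: is_igs_def is_graph_def)
lemma edgR: "(a,b) \<in> edg R \<Longrightarrow> a \<in> syms R \<and> b \<in> syms R" using isR by (auto simp: is_igs_def is_graph_def)
lemma glueR: "t < d \<Longrightarrow> glue R t \<subseteq> syms R \<times> syms R" using isR tysR by (auto simp: is_igs_def)
lemma ityp_lt: "(a,b) \<in> edg R \<Longrightarrow> ityp R (a,b) < d" using isR tysR by (auto simp: is_igs_def)

definition wst :: "nat \<Rightarrow> csym" where "wst t = ((replicate d 1)[t := L], 1)"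
definition vst :: "csym" where "vst = (replicate d 1, 1)"

lemma st_glue: "t < d \<Longrightarrow> (wst t, vst) \<in> glue R t"
proof -
  assume t: "t < d"
  have c3: "\<forall>j<d. \<forall>w v. star_cond d L s j w \<and> star_cond d L s j v \<and>
        (\<forall>i<d. i \<noteq> j \<longrightarrow> fst w ! i = fst v ! i) \<and> fst w ! j = L \<and> fst v ! j = 1
        \<longrightarrow> (w, v) \<in> glue R j" using cub by (simp add: cubical_igs_def)
  have "star_cond d L s t (wst t)" "star_cond d L s t vst"
    using dL t by (auto simp: star_cond_def wst_def vst_def cube_syms_def nth_list_update)
  moreover have "\<forall>i<d. i \<noteq> t \<longrightarrow> fst (wst t) ! i = fst vst ! i" by (auto simp: wst_def vst_def)
  moreover have "fst (wst t) ! t = L" "fst vst ! t = 1" using t by (auto simp: wst_def vst_def)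
  ultimately show ?thesis using c3 t by blast
qed

lemma edge_fact:
  assumes e: "(a,b) \<in> edg R"
  shows "cube_edge_j d (ityp R (a,b)) a b \<and> glue R (ityp R (a,b)) \<subseteq> {(w,v). cube_glue_j d L (ityp R (a,b)) w v}"
proof -
  let ?t = "ityp R (a,b)"
  have t: "?t < d" using ityp_lt e .
  have ab: "a \<in> cube_syms d L s" "b \<in> cube_syms d L s" using edgR[OF e] symsR by auto
  have nab: "a \<noteq> b" using e isR unfolding is_igs_def is_graph_def by blast
  have M: "\<forall>(w, v) \<in> edg R. id w = id v \<or> (id w, id v) \<in> edg (full_cube d L s) \<or> (id v, id w) \<in> edg (full_cube d L s)"
    using mapR by (simp add: igs_mapping_def)
  have M2: "\<forall>(w1, v1) \<in> edg R.
        ((id w1, id v1) \<in> edg (full_cube d L s) \<longrightarrow>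
           (\<forall>(w2, v2) \<in> glue R (ityp R (w1, v1)).
               (id w2, id v2) \<in> glue (full_cube d L s) (ityp (full_cube d L s) (id w1, id v1)))) \<and>
        ((id v1, id w1) \<in> edg (full_cube d L s) \<longrightarrow>
           (\<forall>(w2, v2) \<in> glue R (ityp R (w1, v1)).
               (id v2, id w2) \<in> glue (full_cube d L s) (ityp (full_cube d L s) (id v1, id w1))))"
    using mapR unfolding igs_mapping_def by blast
  have lea: "\<And>j x y. cube_edge_j d j x y \<Longrightarrow> (LEAST i. i < d \<and> fst x ! i \<noteq> fst y ! i) = j"
  proof -
    fix j x y assume c: "cube_edge_j d j x y"
    show "(LEAST i. i < d \<and> fst x ! i \<noteq> fst y ! i) = j"
      apply (rule Least_equality) using c by (auto simp: cube_edge_j_def)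
  qed
  have sg: "(wst ?t, vst) \<in> glue R ?t" using st_glue t .
  from M e nab have "(a,b) \<in> edg (full_cube d L s) \<or> (b,a) \<in> edg (full_cube d L s)" by auto
  then show ?thesis
  proof
    assume f: "(a,b) \<in> edg (full_cube d L s)"
    then obtain j where j: "cube_edge_j d j a b" by (auto simp: full_cube_def)
    have ity: "ityp (full_cube d L s) (a,b) = j" using lea[OF j] by (simp add: full_cube_def)
    have G: "\<forall>(w2, v2) \<in> glue R ?t. cube_glue_j d L j w2 v2"
      using M2 e f ity by (auto simp: full_cube_def)
    have "cube_glue_j d L j (wst ?t) vst" using G sg by auto
    then have cg: "cube_glue_j d L j (wst ?t) vst" .
    have "j = ?t"
    proof (rule ccontr)
      assume "j \<noteq> ?t"
      then have "fst (wst ?t) ! ?t = fst vst ! ?t" using cg t unfolding cube_glue_j_def by blast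
      then show False using t dL by (simp add: wst_def vst_def)
    qed
    then show ?thesis using G j by auto
  next
    assume f: "(b,a) \<in> edg (full_cube d L s)"
    then obtain j where j: "cube_edge_j d j b a" by (auto simp: full_cube_def)
    have ity: "ityp (full_cube d L s) (b,a) = j" using lea[OF j] by (simp add: full_cube_def)
    have G: "\<forall>(w2, v2) \<in> glue R ?t. cube_glue_j d L j v2 w2"
      using M2 e f ity by (auto simp: full_cube_def)
    have "cube_glue_j d L j vst (wst ?t)" using G sg by auto
    then have False using t dL unfolding cube_glue_j_def wst_def vst_def by auto
    then show ?thesis ..
  qed
qed

lemma glue_fact: assumes "t < d" shows "glue R t \<subseteq> {(w,v). cube_glue_j d L t w v}"
proof -
  have "t \<in> ityp R ` edg R" using assms isR tysR by (auto simp: is_igs_def)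
  then obtain a b where "(a,b) \<in> edg R" "t = ityp R (a,b)" by auto
  then show ?thesis using edge_fact by auto
qed

lemma tedges_SucE:
  assumes "(x,y,\<tau>) \<in> tedges R (Suc n)"
  obtains (A) w a b where "x = w @ [a]" "y = w @ [b]" "\<tau> = ityp R (a,b)" "(a,b) \<in> edg R" "w \<in> words R n"
   | (B) w v a b where "x = w @ [a]" "y = v @ [b]" "(w,v,\<tau>) \<in> tedges R n" "(a,b) \<in> glue R \<tau>"
  using assms by (simp only: tedges.simps) blast

lemma tedges_words: "(x,y,\<tau>) \<in> tedges R n \<Longrightarrow> x \<in> words R n \<and> y \<in> words R n \<and> \<tau> < d"
proof (induction n arbitrary: x y \<tau>)
  case 0 then show ?case by simp
next
  case (Suc n)
  from Suc.prems show ?case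
  proof (cases rule: tedges_SucE)
    case (A w a b)
    then show ?thesis using edgR[OF A(4)] ityp_lt[OF A(4)] by (auto simp: words_def)
  next
    case (B w v a b)
    have "w \<in> words R n \<and> v \<in> words R n \<and> \<tau> < d" using Suc.IH B(3) by blast
    moreover have "a \<in> syms R" "b \<in> syms R" using glueR B(4) calculation by auto
    ultimately show ?thesis using B by (auto simp: words_def)
  qed
qed

lemma tedges_pos: "(x,y,\<tau>) \<in> tedges R n \<Longrightarrow> j < d \<Longrightarrow> pos L j y = pos L j x + (if j = \<tau> then 1 else 0)"
proof (induction n arbitrary: x y \<tau>)
  case 0 then show ?case by simp
next
  case (Suc n)
  from Suc.prems(1) show ?case
  proof (cases rule: tedges_SucE)
    case (A w a b)
    then have "cube_edge_j d \<tau> a b" using edge_fact by auto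
    moreover have "1 \<le> fst a ! \<tau>" using edgR[OF A(4)] symsR \<open>cube_edge_j d \<tau> a b\<close>
      by (auto simp: cube_syms_def cube_edge_j_def)
    ultimately show ?thesis using A Suc.prems(2) unfolding cube_edge_j_def by (cases "j = \<tau>") simp_all
  next
    case (B w v a b)
    have t: "\<tau> < d" using tedges_words B(3) by blast
    have "cube_glue_j d L \<tau> a b" using glue_fact[OF t] B(4) by auto
    then have g: "fst a ! \<tau> = L" "fst b ! \<tau> = 1" "j \<noteq> \<tau> \<Longrightarrow> fst a ! j = fst b ! j"
      using Suc.prems(2) by (auto simp: cube_glue_j_def)
    have ih: "pos L j v = pos L j w + (if j = \<tau> then 1 else 0)" using Suc.IH B(3) Suc.prems(2) by blast
    show ?thesis
    proof (cases "j = \<tau>")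
      case True
      have "pos L j y = (pos L j w + 1) * L" using B(2) g True ih by simp
      also have "\<dots> = pos L j w * L + (L - 1) + 1" using dL by simp
      also have "\<dots> = pos L j x + 1" using B(1) g True by simp
      finally show ?thesis using True by simp
    next
      case False
      then show ?thesis using B(1,2) g ih by simp
    qed
  qed
qed

lemma tedges_step: "(x @ [a], y @ [b], \<tau>) \<in> tedges R (Suc n) \<Longrightarrow> x \<noteq> y \<Longrightarrow> (x,y,\<tau>) \<in> tedges R n \<and> (a,b) \<in> glue R \<tau>"
proof -
  assume e: "(x @ [a], y @ [b], \<tau>) \<in> tedges R (Suc n)" and ne: "x \<noteq> y"
  from e show ?thesis
  proof (cases rule: tedges_SucE)
    case (A w a' b')
    then have "x = y" by simp
    with ne show ?thesis by simp
  next
    case (B w v a' b')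
    then show ?thesis by simp
  qed
qed

lemma tedges_struct: "(x,y,\<tau>) \<in> tedges R n \<Longrightarrow> \<exists>u a b g h. x = u @ a # g \<and> y = u @ b # h \<and> (a,b) \<in> edg R \<and>
   ityp R (a,b) = \<tau> \<and> list_all2 (\<lambda>p q. (p,q) \<in> glue R \<tau>) g h"
proof (induction n arbitrary: x y \<tau>)
  case 0 then show ?case by simp
next
  case (Suc n)
  from Suc.prems(1) show ?case
  proof (cases rule: tedges_SucE)
    case (A w a b) then show ?thesis by (intro exI[of _ w] exI[of _ a] exI[of _ b] exI[of _ "[]"]) simp
  next
    case (B w v a b)
    then obtain u a' b' g h where "w = u @ a' # g" "v = u @ b' # h" "(a',b') \<in> edg R"
      "ityp R (a',b') = \<tau>" "list_all2 (\<lambda>p q. (p,q) \<in> glue R \<tau>) g h" using Suc.IH by blast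
    then show ?thesis using B by (intro exI[of _ u] exI[of _ a'] exI[of _ b'] exI[of _ "g@[a]"] exI[of _ "h@[b]"])
      (auto intro: list_all2_appendI)
  qed
qed

lemma words_digok: "x \<in> words R n \<Longrightarrow> j < d \<Longrightarrow> digok L j x"
  using symsR by (auto simp: words_def digok_def cube_syms_def)

lemma plen_proj: "plen (proj k p) \<le> plen p"
  unfolding plen_def proj_def using remdups_adj_length[of "map (take k) p"] by simp

lemma stab:
  assumes "intersection_path R m \<theta>"
  obtains \<Theta> n where "1 \<le> m" "m \<le> n" "\<Theta> m = \<theta>" "\<forall>n\<ge>1. is_path (words R n) (redges R n) (\<Theta> n)"
    "\<forall>n k. 1 \<le> k \<and> k < n \<longrightarrow> proj k (\<Theta> n) = \<Theta> k" "plen (\<Theta> (Suc n)) = plen (\<Theta> n)"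
proof -
  from assms obtain \<Theta> where m1: "1 \<le> m" and T: "\<Theta> m = \<theta>" "\<forall>n\<ge>1. is_path (words R n) (redges R n) (\<Theta> n)"
    "\<forall>n k. 1 \<le> k \<and> k < n \<longrightarrow> proj k (\<Theta> n) = \<Theta> k" and c: "convergent (\<lambda>n. real (plen (\<Theta> n)))"
    unfolding intersection_path_def by blast
  have "\<exists>n\<ge>m. plen (\<Theta> (Suc n)) = plen (\<Theta> n)"
  proof (rule ccontr)
    assume "\<not> ?thesis"
    then have ne: "\<And>n. n \<ge> m \<Longrightarrow> plen (\<Theta> (Suc n)) \<noteq> plen (\<Theta> n)" by blast
    have le: "\<And>n. n \<ge> m \<Longrightarrow> plen (\<Theta> n) \<le> plen (\<Theta> (Suc n))"
    proof -
      fix n assume "n \<ge> m"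
      then have "proj n (\<Theta> (Suc n)) = \<Theta> n" using T(3) m1 by auto
      then show "plen (\<Theta> n) \<le> plen (\<Theta> (Suc n))" using plen_proj by metis
    qed
    have grow: "\<And>t. plen (\<Theta> (m + t)) \<ge> t"
    proof -
      fix t show "plen (\<Theta> (m + t)) \<ge> t"
      proof (induction t)
        case 0 then show ?case by simp
      next
        case (Suc t)
        have "plen (\<Theta> (m + t)) < plen (\<Theta> (Suc (m + t)))" using ne[of "m+t"] le[of "m+t"] by simp
        then show ?case using Suc by simp
      qed
    qed
    from convergent_imp_Bseq[OF c] obtain K where K: "\<And>n. norm (real (plen (\<Theta> n))) \<le> K"
      unfolding Bseq_def by blast
    have "real (nat \<lceil>K\<rceil> + 1) \<le> real (plen (\<Theta> (m + (nat \<lceil>K\<rceil> + 1))))" using grow by (simp only: of_nat_le_iff)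
    also have "\<dots> \<le> K" using K by simp
    finally show False by linarith
  qed
  then obtain n where "n \<ge> m" "plen (\<Theta> (Suc n)) = plen (\<Theta> n)" by blast
  then show ?thesis using that m1 T by blast
qed

lemma window_n:
  assumes n1: "1 \<le> n"
    and P1: "is_path (words R n) (redges R n) xs" and P2: "is_path (words R (Suc n)) (redges R (Suc n)) zs"
    and pr: "proj n zs = xs" and pl: "plen zs = plen xs" and j: "j < d"
  shows "\<forall>x\<in>set xs. \<forall>x'\<in>set xs. \<bar>int (pos L j x) - int (pos L j x')\<bar> \<le> 1"
proof -
  have xsne: "xs \<noteq> []" and zsne: "zs \<noteq> []" using P1 P2 by (auto simp: is_path_def)
  have len: "length zs = length xs" using pl xsne zsne by (simp add: plen_def) (metis Suc_pred length_greater_0_conv)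
  have "length (remdups_adj (map (take n) zs)) = length (map (take n) zs)"
    using pr len by (simp add: proj_def)
  then have da: "distinct_adj (map (take n) zs)" using distinct_adj_conv_length_remdups_adj by blast
  then have xsz: "xs = map (take n) zs" using pr by (simp add: proj_def distinct_adj_altdef)
  have daxs: "distinct_adj xs" using da xsz by simp
  define a where "a i = last (zs ! i)" for i
  define p where "p i = pos L j (xs ! i)" for i
  define e where "e i = fst (a i) ! j - 1" for i
  define V where "V i = int L * int (p i) - int (p i) + int (e i)" for i
  have zsi: "zs ! i = xs ! i @ [a i]" if "i < length zs" for i
  proof -
    have "zs ! i \<in> words R (Suc n)" using P2 that by (auto simp: is_path_def)
    then have l: "length (zs ! i) = Suc n" by (simp add: words_def)
    then have "zs ! i \<noteq> []" by auto
    then have "zs ! i = butlast (zs ! i) @ [last (zs ! i)]" by simp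
    moreover have "butlast (zs ! i) = take n (zs ! i)" using l by (simp add: butlast_conv_take)
    moreover have "take n (zs ! i) = xs ! i" using xsz that by simp
    ultimately show ?thesis by (simp add: a_def)
  qed
  have posz: "pos L j (zs ! i) = p i * L + e i" if "i < length zs" for i
    using zsi[OF that] by (simp add: p_def e_def)
  have step: "V (Suc i) = V i" if si: "Suc i < length zs" for i
  proof -
    have adj: "(zs ! i, zs ! Suc i) \<in> redges R (Suc n) \<or> (zs ! Suc i, zs ! i) \<in> redges R (Suc n)"
      using P2 si by (auto simp: is_path_def)
    have nx: "xs ! i \<noteq> xs ! Suc i" using daxs si len by (simp add: distinct_adj_conv_nth)
    have key: "int L * int (p i') + int (e i') = int L * int (p i) + int (e i) + (int (p i') - int (p i))"
      if "(zs ! i, zs ! i', \<tau>) \<in> tedges R (Suc n)" "i' < length zs" "i < length zs" "xs ! i \<noteq> xs ! i'" for i i' \<tau>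
    proof -
      have t1: "(xs ! i @ [a i], xs ! i' @ [a i'], \<tau>) \<in> tedges R (Suc n)" using that zsi by simp
      have t0: "(xs ! i, xs ! i', \<tau>) \<in> tedges R n" using tedges_step[OF t1 that(4)] by blast
      have "pos L j (zs ! i') = pos L j (zs ! i) + (if j = \<tau> then 1 else 0)" using tedges_pos[OF that(1) j] .
      moreover have "p i' = p i + (if j = \<tau> then 1 else 0)" using tedges_pos[OF t0 j] by (simp add: p_def)
      ultimately have dd: "p i' * L + e i' = p i * L + e i + (if j = \<tau> then 1 else 0)"
        "p i' = p i + (if j = \<tau> then 1 else 0)" using posz that by auto
      define \<delta> where "\<delta> = (if j = \<tau> then 1 else 0::nat)"
      have d1: "p i' * L + e i' = p i * L + e i + \<delta>" "p i' = p i + \<delta>" using dd by (simp_all add: \<delta>_def)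
      have "int (p i' * L + e i') = int (p i * L + e i + \<delta>)" using d1(1) by simp
      then have "int L * int (p i') + int (e i') = int L * int (p i) + int (e i) + int \<delta>"
        by (simp add: mult.commute)
      moreover have "int (p i') = int (p i) + int \<delta>" using d1(2) by simp
      ultimately show ?thesis by linarith
    qed
    from adj show ?thesis
    proof
      assume "(zs ! i, zs ! Suc i) \<in> redges R (Suc n)"
      then obtain \<tau> where "(zs ! i, zs ! Suc i, \<tau>) \<in> tedges R (Suc n)" by (auto simp: redges_def simp del: tedges.simps)
      from key[OF this si _ nx] si show ?thesis by (simp add: V_def)
    next
      assume "(zs ! Suc i, zs ! i) \<in> redges R (Suc n)"
      then obtain \<tau> where "(zs ! Suc i, zs ! i, \<tau>) \<in> tedges R (Suc n)" by (auto simp: redges_def simp del: tedges.simps)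
      from key[OF this _ si] si nx show ?thesis by (simp add: V_def)
    qed
  qed
  have V0: "V i = V 0" if "i < length zs" for i
    using that by (induction i) (auto simp: step)
  have ebd: "e i \<le> L - 1" if "i < length zs" for i
  proof -
    have "a i \<in> set (zs ! i)" using zsi[OF that] by simp
    moreover have "zs ! i \<in> words R (Suc n)" using P2 that by (auto simp: is_path_def)
    ultimately have "a i \<in> cube_syms d L s" using symsR by (auto simp: words_def)
    then show ?thesis using j by (auto simp: e_def cube_syms_def)
  qed
  have pd: "\<bar>int (p i) - int (p i')\<bar> \<le> 1" if "i < length zs" "i' < length zs" for i i'
  proof -
    have "V i = V i'" using V0 that by metis
    then have eq: "(int L - 1) * (int (p i) - int (p i')) = int (e i') - int (e i)"
      by (simp add: V_def algebra_simps)
    have b: "\<bar>int (e i') - int (e i)\<bar> \<le> int L - 1" 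
    proof -
      have "e i \<le> L - 1" "e i' \<le> L - 1" using ebd that by auto
      then have "int (e i) \<le> int L - 1" "int (e i') \<le> int L - 1" using dL by linarith+
      then show ?thesis by linarith
    qed
    have c: "int L - 1 \<ge> 2" using dL by simp
    show ?thesis
    proof (rule ccontr)
      assume "\<not> ?thesis"
      then have "\<bar>int (p i) - int (p i')\<bar> \<ge> 2" by linarith
      then have "(int L - 1) * \<bar>int (p i) - int (p i')\<bar> \<ge> (int L - 1) * 2"
        using c by (intro mult_left_mono) auto
      then have "\<bar>(int L - 1) * (int (p i) - int (p i'))\<bar> \<ge> (int L - 1) * 2"
        using c by (simp add: abs_mult)
      then show False using eq b c by simp
    qed
  qed
  show ?thesis
  proof (intro ballI)
    fix x x' assume "x \<in> set xs" "x' \<in> set xs"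
    then obtain i i' where "i < length xs" "x = xs ! i" "i' < length xs" "x' = xs ! i'" by (metis in_set_conv_nth)
    then show "\<bar>int (pos L j x) - int (pos L j x')\<bar> \<le> 1" using pd[of i i'] len by (simp add: p_def)
  qed
qed

lemma window_m:
  assumes ip: "intersection_path R m \<theta>" and j: "j < d"
  shows "\<forall>y\<in>set \<theta>. \<forall>y'\<in>set \<theta>. \<bar>int (pos L j y) - int (pos L j y')\<bar> \<le> 1"
proof -
  obtain \<Theta> n where S: "1 \<le> m" "m \<le> n" "\<Theta> m = \<theta>" "\<forall>n\<ge>1. is_path (words R n) (redges R n) (\<Theta> n)"
    "\<forall>n k. 1 \<le> k \<and> k < n \<longrightarrow> proj k (\<Theta> n) = \<Theta> k" "plen (\<Theta> (Suc n)) = plen (\<Theta> n)"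
    using stab[OF ip] by blast
  have Wn: "\<forall>x\<in>set (\<Theta> n). \<forall>x'\<in>set (\<Theta> n). \<bar>int (pos L j x) - int (pos L j x')\<bar> \<le> 1"
    by (rule window_n[of n "\<Theta> n" "\<Theta> (Suc n)"]) (use S j in auto)
  show ?thesis
  proof (cases "m = n")
    case True then show ?thesis using Wn S by simp
  next
    case False
    then have mn: "m < n" using S by simp
    then have "\<theta> = proj m (\<Theta> n)" using S by auto
    then have st: "set \<theta> = take m ` set (\<Theta> n)" by (simp add: proj_def)
    have wds: "set (\<Theta> n) \<subseteq> words R n" using S(4) S(1,2) by (auto simp: is_path_def)
    show ?thesis
    proof (intro ballI)
      fix y y' assume "y \<in> set \<theta>" "y' \<in> set \<theta>"
      then obtain x x' where x: "x \<in> set (\<Theta> n)" "y = take m x" and x': "x' \<in> set (\<Theta> n)" "y' = take m x'"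
        using st by auto
      have lx: "length x = n" "length x' = n" using wds x x' by (auto simp: words_def)
      obtain r where r: "pos L j x = pos L j y * L ^ (n - m) + r" "r < L ^ (n - m)"
        using pos_take[of L j x m] words_digok[of x n j] wds x j lx mn by auto
      obtain r' where r': "pos L j x' = pos L j y' * L ^ (n - m) + r'" "r' < L ^ (n - m)"
        using pos_take[of L j x' m] words_digok[of x' n j] wds x' j lx mn by auto
      have "\<bar>int (pos L j x) - int (pos L j x')\<bar> \<le> 1" using Wn x x' by blast
      then show "\<bar>int (pos L j y) - int (pos L j y')\<bar> \<le> 1"
        using win_div[OF r(2) r'(2)] r r' by simp
    qed
  qed
qed

lemma sheet_edge:
  assumes "y = u @ a # g" "y' = u @ b # h" "list_all2 (\<lambda>p q. (p,q) \<in> glue R \<tau>) g h" "\<tau> < d"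
    "k \<noteq> length u" "k < length y"
  shows "snd (y ! k) = snd (y' ! k)"
proof (cases "k < length u")
  case True then show ?thesis using assms by (simp add: nth_append)
next
  case False
  then have k: "k > length u" using assms by simp
  define i where "i = k - length u - 1"
  have li: "i < length g" using assms k by (simp add: i_def)
  have lh: "length h = length g" using assms(3) list_all2_lengthD by metis
  have y1: "y ! k = g ! i" using assms k by (simp add: nth_append i_def)
  have y2: "y' ! k = h ! i" using assms k by (simp add: nth_append i_def)
  have "(g ! i, h ! i) \<in> glue R \<tau>" using assms(3) li list_all2_nthD by blast
  then have "cube_glue_j d L \<tau> (g ! i) (h ! i)" using glue_fact[OF assms(4)] by auto
  then show ?thesis using y1 y2 by (simp add: cube_glue_j_def)
qed

lemma lower_digits:
  assumes "(y,y',\<tau>) \<in> tedges R m" "y = u @ a # g" "y' = u @ b # h" "(a,b) \<in> edg R" "ityp R (a,b) = \<tau>"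
    "list_all2 (\<lambda>p q. (p,q) \<in> glue R \<tau>) g h"
  shows "fst a ! \<tau> \<noteq> L" "set (map (\<lambda>z. fst z ! \<tau>) g) \<subseteq> {L}" "\<tau> < d"
proof -
  have ce: "cube_edge_j d \<tau> a b" using edge_fact[OF assms(4)] assms(5) by simp
  have "b \<in> cube_syms d L s" using edgR[OF assms(4)] symsR by auto
  then have "fst b ! \<tau> \<le> L" using ce by (auto simp: cube_syms_def cube_edge_j_def)
  then show "fst a ! \<tau> \<noteq> L" using ce by (auto simp: cube_edge_j_def)
  show t: "\<tau> < d" using ce by (simp add: cube_edge_j_def)
  show "set (map (\<lambda>z. fst z ! \<tau>) g) \<subseteq> {L}"
  proof
    fix c assume "c \<in> set (map (\<lambda>z. fst z ! \<tau>) g)"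
    then obtain i where i: "i < length g" "c = fst (g ! i) ! \<tau>" by (auto simp: in_set_conv_nth)
    have "(g ! i, h ! i) \<in> glue R \<tau>" using assms(6) i list_all2_nthD by blast
    then have "cube_glue_j d L \<tau> (g ! i) (h ! i)" using glue_fact[OF t] by auto
    then show "c \<in> {L}" using i by (simp add: cube_glue_j_def)
  qed
qed

lemma card_bound:
  assumes ip: "intersection_path R m \<theta>"
  shows "card (set \<theta>) \<le> 3 ^ d * card (syms R) ^ d"
proof -
  obtain \<Theta> where m1: "1 \<le> m" and T: "\<Theta> m = \<theta>" "\<forall>n\<ge>1. is_path (words R n) (redges R n) (\<Theta> n)"
    using ip unfolding intersection_path_def by blast
  have P: "is_path (words R m) (redges R m) \<theta>" using T m1 by auto
  have ne: "\<theta> \<noteq> []" and wd: "set \<theta> \<subseteq> words R m" using P by (auto simp: is_path_def)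
  have lenm: "\<And>y. y \<in> set \<theta> \<Longrightarrow> length y = m" using wd by (auto simp: words_def)
  define w where "w = hd \<theta>"
  have w: "w \<in> set \<theta>" using ne by (simp add: w_def)
  have W: "\<And>j y y'. j < d \<Longrightarrow> y \<in> set \<theta> \<Longrightarrow> y' \<in> set \<theta> \<Longrightarrow> \<bar>int (pos L j y) - int (pos L j y')\<bar> \<le> 1"
    using window_m[OF ip] by blast
  define PK where "PK \<tau> k \<longleftrightarrow> (\<exists>y y' u a b g h. y \<in> set \<theta> \<and> y' \<in> set \<theta> \<and> (y,y',\<tau>) \<in> tedges R m \<and>
     y = u @ a # g \<and> y' = u @ b # h \<and> (a,b) \<in> edg R \<and> ityp R (a,b) = \<tau> \<and>
     list_all2 (\<lambda>p q. (p,q) \<in> glue R \<tau>) g h \<and> length u = k)" for \<tau> k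
  have PKu: "k1 = k2" if pk1: "PK \<tau> k1" and pk2: "PK \<tau> k2" for \<tau> k1 k2
  proof -
    obtain y1 y1' u1 a1 b1 g1 h1 where A: "y1 \<in> set \<theta>" "y1' \<in> set \<theta>" "(y1,y1',\<tau>) \<in> tedges R m"
      "y1 = u1 @ a1 # g1" "y1' = u1 @ b1 # h1" "(a1,b1) \<in> edg R" "ityp R (a1,b1) = \<tau>"
      "list_all2 (\<lambda>p q. (p,q) \<in> glue R \<tau>) g1 h1" "length u1 = k1" using pk1 unfolding PK_def by blast
    obtain y2 y2' u2 a2 b2 g2 h2 where B: "y2 \<in> set \<theta>" "y2' \<in> set \<theta>" "(y2,y2',\<tau>) \<in> tedges R m"
      "y2 = u2 @ a2 # g2" "y2' = u2 @ b2 # h2" "(a2,b2) \<in> edg R" "ityp R (a2,b2) = \<tau>"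
      "list_all2 (\<lambda>p q. (p,q) \<in> glue R \<tau>) g2 h2" "length u2 = k2" using pk2 unfolding PK_def by blast
    note D1 = lower_digits[OF A(3-8)] and D2 = lower_digits[OF B(3-8)]
    have t: "\<tau> < d" using D1 by simp
    have p1: "pos L \<tau> y1' = pos L \<tau> y1 + 1" using tedges_pos[OF A(3) t] by simp
    have p2: "pos L \<tau> y2' = pos L \<tau> y2 + 1" using tedges_pos[OF B(3) t] by simp
    have "\<bar>int (pos L \<tau> y1) - int (pos L \<tau> y2')\<bar> \<le> 1" "\<bar>int (pos L \<tau> y2) - int (pos L \<tau> y1')\<bar> \<le> 1"
      using W t A B by auto
    then have peq: "pos L \<tau> y1 = pos L \<tau> y2" using p1 p2 by linarith
    have "map (\<lambda>a. fst a ! \<tau>) (rev y1) = map (\<lambda>a. fst a ! \<tau>) (rev y2)"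
    proof (rule posr_inj)
      show "length (rev y1) = length (rev y2)" using lenm[OF A(1)] lenm[OF B(1)] by simp
      have "y1 \<in> words R m" "y2 \<in> words R m" using wd A(1) B(1) by auto
      then have "digok L \<tau> y1" "digok L \<tau> y2" using words_digok t by blast+
      then show "digok L \<tau> (rev y1)" "digok L \<tau> (rev y2)" by (simp_all add: digok_def)
      show "posr L \<tau> (rev y1) = posr L \<tau> (rev y2)" using peq by (simp add: pos_def)
    qed
    then have "map (\<lambda>a. fst a ! \<tau>) y1 = map (\<lambda>a. fst a ! \<tau>) y2" by (metis rev_map rev_rev_ident)
    then have "map (\<lambda>a. fst a ! \<tau>) u1 @ (fst a1 ! \<tau>) # map (\<lambda>a. fst a ! \<tau>) g1 =
               map (\<lambda>a. fst a ! \<tau>) u2 @ (fst a2 ! \<tau>) # map (\<lambda>a. fst a ! \<tau>) g2" using A(4) B(4) by simp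
    from split_uniq[OF this D1(1) D2(1) D1(2) D2(2)] show ?thesis using A(9) B(9) by simp
  qed
  define kk where "kk \<tau> = (if \<exists>k. PK \<tau> k then THE k. PK \<tau> k else 0)" for \<tau>
  have kk_eq: "kk \<tau> = k" if "PK \<tau> k" for \<tau> k
    using that PKu unfolding kk_def by (auto intro: the_equality)
  have kk_lt: "kk \<tau> < m" for \<tau>
  proof (cases "\<exists>k. PK \<tau> k")
    case True
    then obtain k where k: "PK \<tau> k" by blast
    then obtain y u a g where "y \<in> set \<theta>" "y = u @ a # g" "length u = k" unfolding PK_def by blast
    then have "k < m" using lenm by fastforce
    then show ?thesis using kk_eq[OF k] by simp
  next
    case False then show ?thesis using m1 by (simp add: kk_def)
  qed
  have edge_sheet: "snd (y ! k) = snd (y' ! k)"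
    if H: "y \<in> set \<theta>" "y' \<in> set \<theta>" "(y,y',\<tau>) \<in> tedges R m" "k < m" "k \<notin> kk ` {..<d}" for y y' \<tau> k
  proof -
    obtain u a b g h where S: "y = u @ a # g" "y' = u @ b # h" "(a,b) \<in> edg R" "ityp R (a,b) = \<tau>"
      "list_all2 (\<lambda>p q. (p,q) \<in> glue R \<tau>) g h" using tedges_struct[OF H(3)] by blast
    have "PK \<tau> (length u)" unfolding PK_def using H S by blast
    then have ku: "kk \<tau> = length u" by (rule kk_eq)
    have t: "\<tau> < d" using lower_digits[OF H(3) S] by simp
    have "k \<noteq> length u" using H(5) ku t by (metis imageI lessThan_iff)
    then show ?thesis using sheet_edge[OF S(1,2,5) t] H lenm by simp
  qed
  have sheets: "\<forall>k<m. k \<notin> kk ` {..<d} \<longrightarrow> snd (\<theta> ! i ! k) = snd (w ! k)" if "i < length \<theta>" for i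
    using that
  proof (induction i)
    case 0 then show ?case using ne by (simp add: w_def hd_conv_nth)
  next
    case (Suc i)
    have i1: "\<theta> ! i \<in> set \<theta>" "\<theta> ! Suc i \<in> set \<theta>" using Suc.prems by auto
    have adj: "(\<theta> ! i, \<theta> ! Suc i) \<in> redges R m \<or> (\<theta> ! Suc i, \<theta> ! i) \<in> redges R m"
      using P Suc.prems by (auto simp: is_path_def)
    have "snd (\<theta> ! i ! k) = snd (\<theta> ! Suc i ! k)" if "k < m" "k \<notin> kk ` {..<d}" for k
      using adj
    proof
      assume "(\<theta> ! i, \<theta> ! Suc i) \<in> redges R m"
      then obtain \<tau> where "(\<theta> ! i, \<theta> ! Suc i, \<tau>) \<in> tedges R m" by (auto simp: redges_def simp del: tedges.simps)
      then show ?thesis by (rule edge_sheet[OF i1(1) i1(2) _ that])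
    next
      assume "(\<theta> ! Suc i, \<theta> ! i) \<in> redges R m"
      then obtain \<tau> where "(\<theta> ! Suc i, \<theta> ! i, \<tau>) \<in> tedges R m" by (auto simp: redges_def simp del: tedges.simps)
      then have "snd (\<theta> ! Suc i ! k) = snd (\<theta> ! i ! k)" by (rule edge_sheet[OF i1(2) i1(1) _ that])
      then show ?thesis by simp
    qed
    then show ?case using Suc by auto
  qed
  have sheetsY: "snd (y ! k) = snd (w ! k)" if "y \<in> set \<theta>" "k < m" "k \<notin> kk ` {..<d}" for y k
    using that sheets by (metis in_set_conv_nth)
  define f where "f y = (map (\<lambda>j. int (pos L j y) - int (pos L j w)) [0..<d], map (\<lambda>j. y ! kk j) [0..<d])" for y
  have inj: "inj_on f (set \<theta>)"
  proof (rule inj_onI)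
    fix y1 y2 assume y1: "y1 \<in> set \<theta>" and y2: "y2 \<in> set \<theta>" and fe: "f y1 = f y2"
    have fe': "(\<forall>x\<in>{0..<d}. pos L x y1 = pos L x y2) \<and> (\<forall>x\<in>{0..<d}. y1 ! kk x = y2 ! kk x)"
      using fe by (simp add: f_def)
    have pe: "pos L j y1 = pos L j y2" if "j < d" for j using fe' that by auto
    have ke: "y1 ! kk j = y2 ! kk j" if "j < d" for j using fe' that by auto
    have l1: "length y1 = m" "length y2 = m" using lenm y1 y2 by auto
    have cd: "fst (y1 ! k) ! j = fst (y2 ! k) ! j" if "k < m" "j < d" for k j
    proof -
      have "map (\<lambda>a. fst a ! j) (rev y1) = map (\<lambda>a. fst a ! j) (rev y2)"
      proof (rule posr_inj)
        show "length (rev y1) = length (rev y2)" using l1 by simp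
        have "y1 \<in> words R m" "y2 \<in> words R m" using wd y1 y2 by auto
        then have "digok L j y1" "digok L j y2" using words_digok that(2) by blast+
        then show "digok L j (rev y1)" "digok L j (rev y2)" by (simp_all add: digok_def)
        show "posr L j (rev y1) = posr L j (rev y2)" using pe[OF that(2)] by (simp add: pos_def)
      qed
      then have "map (\<lambda>a. fst a ! j) y1 = map (\<lambda>a. fst a ! j) y2" by (metis rev_map rev_rev_ident)
      then have "map (\<lambda>a. fst a ! j) y1 ! k = map (\<lambda>a. fst a ! j) y2 ! k" by simp
      then show ?thesis using that l1 by simp
    qed
    have lett: "y1 ! k = y2 ! k" if "k < m" for k
    proof -
      have "y1 \<in> words R m" "y2 \<in> words R m" using wd y1 y2 by auto
      moreover have "y1 ! k \<in> set y1" "y2 ! k \<in> set y2" using that l1 by auto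
      ultimately have "y1 ! k \<in> syms R" "y2 ! k \<in> syms R" unfolding words_def by blast+
      then have "y1 ! k \<in> cube_syms d L s" "y2 ! k \<in> cube_syms d L s" using symsR by blast+
      then have ld: "length (fst (y1 ! k)) = d" "length (fst (y2 ! k)) = d" by (auto simp: cube_syms_def)
      have f: "fst (y1 ! k) = fst (y2 ! k)" by (rule nth_equalityI) (use ld cd that in auto)
      show ?thesis
      proof (cases "k \<in> kk ` {..<d}")
        case True then show ?thesis using ke by auto
      next
        case False
        then have "snd (y1 ! k) = snd (y2 ! k)" using sheetsY y1 y2 that by metis
        then show ?thesis using f by (simp add: prod_eq_iff)
      qed
    qed
    show "y1 = y2" by (rule nth_equalityI) (use l1 lett in auto)
  qed
  define A1 where "A1 = {xs. set xs \<subseteq> {-1, 0, 1::int} \<and> length xs = d}"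
  define A2 where "A2 = {xs. set xs \<subseteq> syms R \<and> length xs = d}"
  have img: "f ` set \<theta> \<subseteq> A1 \<times> A2"
  proof
    fix z assume "z \<in> f ` set \<theta>"
    then obtain y where y: "y \<in> set \<theta>" "z = f y" by blast
    have "\<bar>int (pos L j y) - int (pos L j w)\<bar> \<le> 1" if "j < d" for j using W[OF that y(1) w] .
    then have H3: "int (pos L j y) - int (pos L j w) \<in> {-1, 0, 1}" if "j < d" for j using that int3 by blast
    have s1: "set (map (\<lambda>j. int (pos L j y) - int (pos L j w)) [0..<d]) \<subseteq> {-1, 0, 1}"
      unfolding set_map
    proof (rule image_subsetI)
      fix j assume "j \<in> set [0..<d]"
      then have "j < d" by simp
      then show "int (pos L j y) - int (pos L j w) \<in> {-1, 0, 1}" by (rule H3)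
    qed
    have s2: "set (map (\<lambda>j. y ! kk j) [0..<d]) \<subseteq> syms R"
    proof -
      have "y ! kk j \<in> syms R" for j
      proof -
        have "y ! kk j \<in> set y" using kk_lt lenm[OF y(1)] by (metis nth_mem)
        then show ?thesis using wd y(1) by (auto simp: words_def)
      qed
      then show ?thesis by auto
    qed
    have "fst (f y) \<in> A1" "snd (f y) \<in> A2" using s1 s2 unfolding f_def A1_def A2_def by simp_all
    then show "z \<in> A1 \<times> A2" using y(2) by (simp add: mem_Times_iff)
  qed
  have "finite A1" unfolding A1_def by (rule finite_lists_length_eq) simp
  moreover have "finite A2" unfolding A2_def by (rule finite_lists_length_eq[OF finR])
  ultimately have fin: "finite (A1 \<times> A2)" by simp
  have c1: "card A1 = 3 ^ d" unfolding A1_def using card_lists_length_eq[of "{-1,0,1::int}" d] by (simp add: numeral_3_eq_3)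
  have c2: "card A2 = card (syms R) ^ d" unfolding A2_def using card_lists_length_eq[OF finR, of d] by simp
  have "card (set \<theta>) = card (f ` set \<theta>)" using card_image[OF inj] by simp
  also have "\<dots> \<le> card (A1 \<times> A2)" using card_mono[OF fin img] .
  also have "\<dots> = 3 ^ d * card (syms R) ^ d"
    using card_lists_length_eq[of "{-1,0,1::int}" d] card_lists_length_eq[OF finR, of d]
    using c1 c2 by (simp add: card_cartesian_product)
  finally show ?thesis .
qed

lemma diam_bound: "gdiam (words R (length w)) (redges R (length w)) (nbhd R w) \<le> enat (2 * (3 ^ d * card (syms R) ^ d))"
  unfolding gdiam_def
proof (rule SUP_least)
  fix vv assume "vv \<in> nbhd R w \<times> nbhd R w"
  then obtain v1 v2 where vv: "vv = (v1, v2)" "v1 \<in> nbhd R w" "v2 \<in> nbhd R w" by auto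
  let ?m = "length w"
  obtain t1 where t1: "intersection_path R ?m t1" "hd t1 = w" "last t1 = v1" using vv(2) by (auto simp: nbhd_def)
  obtain t2 where t2: "intersection_path R ?m t2" "hd t2 = w" "last t2 = v2" using vv(3) by (auto simp: nbhd_def)
  have P1: "is_path (words R ?m) (redges R ?m) t1" using t1(1) unfolding intersection_path_def by auto
  have P2: "is_path (words R ?m) (redges R ?m) t2" using t2(1) unfolding intersection_path_def by auto
  let ?E = "redges R ?m"
  define p where "p = rev t1 @ t2"
  have ne: "t1 \<noteq> []" "t2 \<noteq> []" using P1 P2 by (auto simp: is_path_def)
  have s1: "successively (\<lambda>x y. ((x,y) \<in> ?E \<or> (y,x) \<in> ?E) \<or> x = y) (rev t1)"
    using P1 unfolding path_succ by (auto elim: successively_mono)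
  have s2: "successively (\<lambda>x y. ((x,y) \<in> ?E \<or> (y,x) \<in> ?E) \<or> x = y) t2"
    using P2 unfolding path_succ by (auto elim: successively_mono)
  have "last (rev t1) = hd t2" using ne t1(2) t2(2) by (simp add: last_rev)
  then have sp: "successively (\<lambda>x y. ((x,y) \<in> ?E \<or> (y,x) \<in> ?E) \<or> x = y) p"
    using s1 s2 unfolding p_def successively_append_iff by auto
  have pne: "p \<noteq> []" using ne by (simp add: p_def)
  have pV: "set p \<subseteq> words R ?m" using P1 P2 by (auto simp: p_def is_path_def)
  have hp: "hd p = v1" using ne t1(3) by (simp add: p_def hd_rev)
  have lp: "last p = v2" using ne t2(3) by (simp add: p_def)
  have "card (set p) \<le> card (set t1) + card (set t2)" by (simp add: p_def card_Un_le)
  also have "\<dots> \<le> 2 * (3 ^ d * card (syms R) ^ d)" using card_bound[OF t1(1)] card_bound[OF t2(1)] by simp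
  finally have cp: "card (set p) \<le> 2 * (3 ^ d * card (syms R) ^ d)" .
  have "gdist (words R ?m) ?E v1 v2 \<le> enat (card (set p) - 1)" using gdist_card[OF pne pV sp] hp lp by simp
  also have "\<dots> \<le> enat (2 * (3 ^ d * card (syms R) ^ d))" using cp by simp
  finally show "gdist (words R ?m) ?E (fst vv) (snd vv) \<le> enat (2 * (3 ^ d * card (syms R) ^ d))" using vv by simp
qed

end

theorem proposition5p7:
  fixes R :: "(csym, nat) igs" and d L s :: nat
  assumes "cubical_igs d L s R"
  shows "bounded_geometry R"
proof -
  interpret cub d L s R using assms by (unfold_locales)
  have "(SUP w \<in> all_words R. gdiam (words R (length w)) (redges R (length w)) (nbhd R w))
        \<le> enat (2 * (3 ^ d * card (syms R) ^ d))"
    by (rule SUP_least) (rule diam_bound)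
  also have "\<dots> < \<infinity>" by simp
  finally show ?thesis unfolding bounded_geometry_def .
qed

end
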